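(* Let $F$ be a field of characteristic different from $2$, let $a_1,a_2\in F^\times$ be such that $E=F(\sqrt{a_1},\sqrt{a_2})$ is Galois over $F$ with Galois group isomorphic to $\mathbb Z/2\mathbb Z\times\mathbb Z/2\mathbb Z$, and let $E_1=F(\sqrt{a_1})$, $E_2=F(\sqrt{a_2})$, $E_3=F(\sqrt{a_1a_2})$. Then \[N_{E/E_3}(E^\times)\cap F^\times=N_{E_1/F}(E_1^\times)\cdot N_{E_2/F}(E_2^\times).\]
   Context: For a quadratic extension $L/K$ with nontrivial automorphism $\tau$, $N_{L/K}(x)=x\,\tau(x)$ for $x\in L^\times$. For subsets $A,B$ of a multiplicative group, $A\cdot B=\{ab:a\in A,b\in B\}$. *)

theory Defs
  imports Main
begin

definition is_subfield :: "'a::field set \<Rightarrow> bool" where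
  "is_subfield K \<longleftrightarrow> 0 \<in> K \<and> 1 \<in> K \<and>
     (\<forall>x\<in>K. \<forall>y\<in>K. x + y \<in> K \<and> x * y \<in> K) \<and>
     (\<forall>x\<in>K. - x \<in> K \<and> inverse x \<in> K)"

definition gen_field :: "'a::field set \<Rightarrow> 'a set \<Rightarrow> 'a set" where
  "gen_field K S = \<Inter> {L. is_subfield L \<and> K \<union> S \<subseteq> L}"

definition auts :: "'a::field set \<Rightarrow> 'a set \<Rightarrow> ('a \<Rightarrow> 'a) set" where
  "auts L K = {\<sigma>. bij_betw \<sigma> L L \<and>
      (\<forall>x\<in>L. \<forall>y\<in>L. \<sigma> (x + y) = \<sigma> x + \<sigma> y \<and> \<sigma> (x * y) = \<sigma> x * \<sigma> y) \<and>
      \<sigma> 1 = 1 \<and> (\<forall>x\<in>K. \<sigma> x = x) \<and> (\<forall>x. x \<notin> L \<longrightarrow> \<sigma> x = x)}"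

definition fixed_field :: "'a::field set \<Rightarrow> ('a \<Rightarrow> 'a) set \<Rightarrow> 'a set" where
  "fixed_field L G = {x\<in>L. \<forall>\<sigma>\<in>G. \<sigma> x = x}"

text \<open>L/K is Galois with Galois group isomorphic to Z/2 x Z/2 (modelled as bool x bool with xor).\<close>
definition galois_V4 :: "'a::field set \<Rightarrow> 'a set \<Rightarrow> bool" where
  "galois_V4 L K \<longleftrightarrow> fixed_field L (auts L K) = K \<and>
     (\<exists>\<phi>. bij_betw \<phi> (auts L K) (UNIV :: (bool \<times> bool) set) \<and>
        (\<forall>\<sigma>\<in>auts L K. \<forall>\<tau>\<in>auts L K.
           \<phi> (\<sigma> \<circ> \<tau>) = (fst (\<phi> \<sigma>) \<noteq> fst (\<phi> \<tau>), snd (\<phi> \<sigma>) \<noteq> snd (\<phi> \<tau>))))"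

definition quad_norm :: "'a::field set \<Rightarrow> 'a set \<Rightarrow> 'a \<Rightarrow> 'a" where
  "quad_norm L K x = x * (THE \<tau>. \<tau> \<in> auts L K \<and> \<tau> \<noteq> id) x"

definition setmul :: "'a::times set \<Rightarrow> 'a set \<Rightarrow> 'a set" where
  "setmul A B = {a * b | a b. a \<in> A \<and> b \<in> B}"

end

theory Submission
  imports Defs
begin


lemma sf_0: "is_subfield L \<Longrightarrow> 0 \<in> L" by (simp add: is_subfield_def)
lemma sf_1: "is_subfield L \<Longrightarrow> 1 \<in> L" by (simp add: is_subfield_def)
lemma sf_add: "is_subfield L \<Longrightarrow> x \<in> L \<Longrightarrow> y \<in> L \<Longrightarrow> x + y \<in> L" by (simp add: is_subfield_def)
lemma sf_mult: "is_subfield L \<Longrightarrow> x \<in> L \<Longrightarrow> y \<in> L \<Longrightarrow> x * y \<in> L" by (simp add: is_subfield_def)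
lemma sf_uminus: "is_subfield L \<Longrightarrow> x \<in> L \<Longrightarrow> - x \<in> L" by (simp add: is_subfield_def)
lemma sf_inverse: "is_subfield L \<Longrightarrow> x \<in> L \<Longrightarrow> inverse x \<in> L" by (simp add: is_subfield_def)
lemma sf_diff: "is_subfield L \<Longrightarrow> x \<in> L \<Longrightarrow> y \<in> L \<Longrightarrow> x - y \<in> L"
  using sf_add[of L x "-y"] sf_uminus[of L y] by simp
lemma sf_2: assumes "is_subfield L" shows "(2::'a::field) \<in> L"
proof -
  have "(1::'a) + 1 \<in> L" using sf_add sf_1 assms by blast
  then show ?thesis by simp
qed

lemma gen_field_subfield: "is_subfield (gen_field K S)"
  unfolding gen_field_def is_subfield_def by auto
lemma gen_field_incl: "K \<union> S \<subseteq> gen_field K S" unfolding gen_field_def by auto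
lemma gen_field_least: "is_subfield L \<Longrightarrow> K \<union> S \<subseteq> L \<Longrightarrow> gen_field K S \<subseteq> L"
  unfolding gen_field_def by (rule Inter_lower) simp

definition homL :: "'a::field set \<Rightarrow> ('a \<Rightarrow> 'a) \<Rightarrow> bool" where
  "homL L \<sigma> \<longleftrightarrow> (\<forall>x\<in>L. \<forall>y\<in>L. \<sigma> (x + y) = \<sigma> x + \<sigma> y \<and> \<sigma> (x * y) = \<sigma> x * \<sigma> y) \<and> \<sigma> 1 = 1"

lemma auts_homL: "\<sigma> \<in> auts L K \<Longrightarrow> homL L \<sigma>" by (simp add: auts_def homL_def)
lemma homL_id: "homL L id" by (simp add: homL_def)
lemma homL_add: "homL L \<sigma> \<Longrightarrow> x \<in> L \<Longrightarrow> y \<in> L \<Longrightarrow> \<sigma> (x + y) = \<sigma> x + \<sigma> y" unfolding homL_def by blast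
lemma homL_mult: "homL L \<sigma> \<Longrightarrow> x \<in> L \<Longrightarrow> y \<in> L \<Longrightarrow> \<sigma> (x * y) = \<sigma> x * \<sigma> y" unfolding homL_def by blast
lemma homL_1: "homL L \<sigma> \<Longrightarrow> \<sigma> 1 = 1" by (simp add: homL_def)
lemma homL_0: assumes "homL L \<sigma>" "is_subfield L" shows "\<sigma> 0 = 0"
proof -
  have "\<sigma> (0 + 0) = \<sigma> 0 + \<sigma> 0" using assms sf_0 homL_add by blast
  then show ?thesis by (metis add.right_neutral add_left_cancel)
qed
lemma homL_uminus: assumes "homL L \<sigma>" "is_subfield L" "x \<in> L" shows "\<sigma> (- x) = - \<sigma> x"
proof -
  have "\<sigma> (x + - x) = \<sigma> x + \<sigma> (- x)" using assms sf_uminus homL_add by blast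
  then show ?thesis using homL_0[OF assms(1,2)] by (simp add: eq_neg_iff_add_eq_0 add.commute)
qed
lemma homL_diff: assumes "homL L \<sigma>" "is_subfield L" "x \<in> L" "y \<in> L" shows "\<sigma> (x - y) = \<sigma> x - \<sigma> y"
  using homL_add[OF assms(1) assms(3) sf_uminus[OF assms(2,4)]] homL_uminus[OF assms(1,2,4)] by simp
lemma homL_inverse: assumes "homL L \<sigma>" "is_subfield L" "x \<in> L" shows "\<sigma> (inverse x) = inverse (\<sigma> x)"
proof (cases "x = 0")
  case True then show ?thesis using homL_0[OF assms(1,2)] by simp
next
  case False
  have "\<sigma> (x * inverse x) = \<sigma> x * \<sigma> (inverse x)" using assms sf_inverse homL_mult by blast
  then have "\<sigma> x * \<sigma> (inverse x) = 1" using False homL_1[OF assms(1)] by simp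
  then show ?thesis by (metis inverse_unique)
qed
lemma homL_nonzero: assumes "homL L \<sigma>" "is_subfield L" "x \<in> L" "x \<noteq> 0" shows "\<sigma> x \<noteq> 0"
proof
  assume "\<sigma> x = 0"
  have "\<sigma> (x * inverse x) = \<sigma> x * \<sigma> (inverse x)" using assms sf_inverse homL_mult by blast
  then show False using \<open>\<sigma> x = 0\<close> assms(4) homL_1[OF assms(1)] by simp
qed
lemma homL_sq: "homL L \<sigma> \<Longrightarrow> x \<in> L \<Longrightarrow> \<sigma> (x^2) = (\<sigma> x)^2"
  by (simp add: power2_eq_square homL_mult)

lemma equalizer_subfield:
  assumes "is_subfield L" "homL L \<sigma>" "homL L \<sigma>'"
  shows "is_subfield {x\<in>L. \<sigma> x = \<sigma>' x}"
proof -
  note L = assms(1)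
  show ?thesis unfolding is_subfield_def[of "{x\<in>L. \<sigma> x = \<sigma>' x}"]
    using sf_0[OF L] sf_1[OF L] sf_add[OF L] sf_mult[OF L] sf_uminus[OF L] sf_inverse[OF L]
      homL_0[OF assms(2) L] homL_0[OF assms(3) L] homL_1[OF assms(2)] homL_1[OF assms(3)]
      homL_add[OF assms(2)] homL_add[OF assms(3)] homL_mult[OF assms(2)] homL_mult[OF assms(3)]
      homL_uminus[OF assms(2) L] homL_uminus[OF assms(3) L]
      homL_inverse[OF assms(2) L] homL_inverse[OF assms(3) L]
    by (simp del: inverse_zero)
qed

lemma preimage_subfield:
  assumes "is_subfield L" "homL L \<sigma>" "is_subfield M"
  shows "is_subfield {x\<in>L. \<sigma> x \<in> M}"
proof -
  note L = assms(1) and M = assms(3)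
  show ?thesis unfolding is_subfield_def[of "{x\<in>L. \<sigma> x \<in> M}"]
    using sf_0[OF L] sf_1[OF L] sf_add[OF L] sf_mult[OF L] sf_uminus[OF L] sf_inverse[OF L]
      sf_0[OF M] sf_1[OF M] sf_add[OF M] sf_mult[OF M] sf_uminus[OF M] sf_inverse[OF M]
      homL_0[OF assms(2) L] homL_1[OF assms(2)]
      homL_add[OF assms(2)] homL_mult[OF assms(2)]
      homL_uminus[OF assms(2) L] homL_inverse[OF assms(2) L]
    by (simp del: inverse_zero)
qed

lemma id_auts: "id \<in> auts L K" by (simp add: auts_def)

lemma auts_bij: "\<sigma> \<in> auts L K \<Longrightarrow> bij_betw \<sigma> L L" by (simp add: auts_def)
lemma auts_map: "\<sigma> \<in> auts L K \<Longrightarrow> x \<in> L \<Longrightarrow> \<sigma> x \<in> L"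
  by (rule bij_betw_apply[OF auts_bij])
lemma auts_fix: "\<sigma> \<in> auts L K \<Longrightarrow> x \<in> K \<Longrightarrow> \<sigma> x = x" by (simp add: auts_def)
lemma auts_out: "\<sigma> \<in> auts L K \<Longrightarrow> x \<notin> L \<Longrightarrow> \<sigma> x = x" by (simp add: auts_def)

lemma auts_comp: assumes "\<sigma> \<in> auts L K" "\<sigma>' \<in> auts L K" shows "\<sigma> \<circ> \<sigma>' \<in> auts L K"
proof -
  have "bij_betw (\<sigma> \<circ> \<sigma>') L L" using auts_bij[OF assms(1)] auts_bij[OF assms(2)] by (rule bij_betw_trans[rotated])
  moreover have "\<forall>x\<in>L. \<forall>y\<in>L. (\<sigma> \<circ> \<sigma>') (x + y) = (\<sigma> \<circ> \<sigma>') x + (\<sigma> \<circ> \<sigma>') y \<and>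
        (\<sigma> \<circ> \<sigma>') (x * y) = (\<sigma> \<circ> \<sigma>') x * (\<sigma> \<circ> \<sigma>') y"
    using assms auts_map[OF assms(2)] auts_homL[OF assms(1)] auts_homL[OF assms(2)]
    by (simp add: homL_add homL_mult)
  ultimately show ?thesis using assms unfolding auts_def by auto
qed

lemma auts_K: "\<sigma> \<in> auts L K \<Longrightarrow> \<forall>x\<in>K'. \<sigma> x = x \<Longrightarrow> \<sigma> \<in> auts L K'"
  unfolding auts_def by blast

lemma aut_determined:
  assumes "\<sigma> \<in> auts (gen_field K S) K1" "\<sigma>' \<in> auts (gen_field K S) K2"
    "\<forall>x\<in>K. \<sigma> x = \<sigma>' x" "\<forall>s\<in>S. \<sigma> s = \<sigma>' s"
  shows "\<sigma> = \<sigma>'"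
proof
  fix x
  let ?L = "gen_field K S"
  have "?L \<subseteq> {x\<in>?L. \<sigma> x = \<sigma>' x}"
    apply (rule gen_field_least)
    using equalizer_subfield[OF gen_field_subfield auts_homL[OF assms(1)] auts_homL[OF assms(2)]]
     apply simp
    using gen_field_incl[of K S] assms(3,4) by auto
  then show "\<sigma> x = \<sigma>' x" using auts_out[OF assms(1)] auts_out[OF assms(2)] by (cases "x \<in> ?L") auto
qed

lemma restrict_aut:
  assumes "\<sigma> \<in> auts L K" "is_subfield M" "M \<subseteq> L" "\<forall>x\<in>M. \<sigma> x \<in> M" "\<forall>x\<in>M. \<sigma> (\<sigma> x) = x"
    "K0 \<subseteq> K"
  shows "(\<lambda>x. if x \<in> M then \<sigma> x else x) \<in> auts M K0"
proof -
  let ?r = "\<lambda>x. if x \<in> M then \<sigma> x else x"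
  have "bij_betw ?r M M"
    by (rule bij_betw_byWitness[where f'="?r"]) (use assms(4,5) in auto)
  moreover have "\<forall>x\<in>M. \<forall>y\<in>M. ?r (x + y) = ?r x + ?r y \<and> ?r (x * y) = ?r x * ?r y"
    using assms(2,3) auts_homL[OF assms(1)] by (auto simp: sf_add sf_mult homL_add homL_mult subsetD)
  moreover have "?r 1 = 1" using assms(2) auts_homL[OF assms(1)] by (simp add: sf_1 homL_1)
  moreover have "\<forall>x\<in>K0. ?r x = x" using assms(6) auts_fix[OF assms(1)] by auto
  ultimately show ?thesis unfolding auts_def by auto
qed

lemma quad_THE:
  fixes \<gamma> :: "'a::field"
  assumes "(2::'a) \<noteq> 0" "\<gamma> \<noteq> 0" "\<gamma>^2 \<in> K"
    "\<rho>0 \<in> auts (gen_field K {\<gamma>}) K" "\<rho>0 \<gamma> = -\<gamma>"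
  shows "(THE \<rho>. \<rho> \<in> auts (gen_field K {\<gamma>}) K \<and> \<rho> \<noteq> id) = \<rho>0"
proof (rule the_equality)
  have ng: "\<gamma> \<noteq> - \<gamma>"
  proof
    assume "\<gamma> = - \<gamma>" then have "2 * \<gamma> = 0" by (metis add_eq_0_iff2 mult_2)
    then show False using assms(1,2) by simp
  qed
  show "\<rho>0 \<in> auts (gen_field K {\<gamma>}) K \<and> \<rho>0 \<noteq> id" using assms(4,5) ng by auto
  fix \<rho> assume r: "\<rho> \<in> auts (gen_field K {\<gamma>}) K \<and> \<rho> \<noteq> id"
  have gL: "\<gamma> \<in> gen_field K {\<gamma>}" using gen_field_incl by blast
  have "(\<rho> \<gamma>)^2 = \<gamma>^2" using homL_sq[OF auts_homL gL, of \<rho> K] r auts_fix[of \<rho> _ K] assms(3) by auto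
  then have "\<rho> \<gamma> = \<gamma> \<or> \<rho> \<gamma> = - \<gamma>" by (simp add: power2_eq_iff)
  moreover have "\<rho> \<gamma> \<noteq> \<gamma>"
  proof
    assume "\<rho> \<gamma> = \<gamma>"
    then have "\<rho> = id" using aut_determined[OF _ id_auts, of \<rho> K "{\<gamma>}" K] r auts_fix[of \<rho> _ K] by auto
    then show False using r by simp
  qed
  ultimately have "\<rho> \<gamma> = \<rho>0 \<gamma>" using assms(5) by simp
  then show "\<rho> = \<rho>0" using aut_determined[of \<rho> K "{\<gamma>}" K \<rho>0 K] r assms(4) auts_fix[of \<rho> _ K] auts_fix[of \<rho>0 _ K] by auto
qed



theorem mainTheorem6:
  fixes F :: "'a::field set" and a1 a2 \<alpha> \<beta> :: 'a
  assumes "is_subfield F"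
    and "(2::'a) \<noteq> 0"
    and "a1 \<in> F" "a1 \<noteq> 0" "a2 \<in> F" "a2 \<noteq> 0"
    and "\<alpha>\<^sup>2 = a1" "\<beta>\<^sup>2 = a2"
    and "galois_V4 (gen_field F {\<alpha>, \<beta>}) F"
  shows "quad_norm (gen_field F {\<alpha>, \<beta>}) (gen_field F {\<alpha> * \<beta>})
             ` (gen_field F {\<alpha>, \<beta>} - {0}) \<inter> (F - {0})
         = setmul (quad_norm (gen_field F {\<alpha>}) F ` (gen_field F {\<alpha>} - {0}))
                  (quad_norm (gen_field F {\<beta>}) F ` (gen_field F {\<beta>} - {0}))"
proof -
  note sF = assms(1) and two = assms(2)
  define E where "E = gen_field F {\<alpha>, \<beta>}"
  define E1 where "E1 = gen_field F {\<alpha>}"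
  define E2 where "E2 = gen_field F {\<beta>}"
  define E3 where "E3 = gen_field F {\<alpha> * \<beta>}"
  define A where "A = auts E F"
  have sE: "is_subfield E" and sE1: "is_subfield E1" and sE2: "is_subfield E2" and sE3: "is_subfield E3"
    unfolding E_def E1_def E2_def E3_def by (rule gen_field_subfield)+
  have FE: "F \<subseteq> E" and aE: "\<alpha> \<in> E" and bE: "\<beta> \<in> E"
    using gen_field_incl[of F "{\<alpha>,\<beta>}"] unfolding E_def by auto
  have FE1: "F \<subseteq> E1" and aE1: "\<alpha> \<in> E1" using gen_field_incl[of F "{\<alpha>}"] unfolding E1_def by auto
  have FE2: "F \<subseteq> E2" and bE2: "\<beta> \<in> E2" using gen_field_incl[of F "{\<beta>}"] unfolding E2_def by auto
  have FE3: "F \<subseteq> E3" and abE3: "\<alpha> * \<beta> \<in> E3" using gen_field_incl[of F "{\<alpha>*\<beta>}"] unfolding E3_def by auto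
  have E1E: "E1 \<subseteq> E" unfolding E1_def by (rule gen_field_least[OF sE]) (use FE aE in auto)
  have E2E: "E2 \<subseteq> E" unfolding E2_def by (rule gen_field_least[OF sE]) (use FE bE in auto)
  have E3E: "E3 \<subseteq> E" unfolding E3_def by (rule gen_field_least[OF sE]) (use FE aE bE sf_mult[OF sE] in auto)
  have a0: "\<alpha> \<noteq> 0" using assms(4,7) by auto
  have b0: "\<beta> \<noteq> 0" using assms(6,8) by auto
  have neg: "\<And>x::'a. x = - x \<Longrightarrow> x = 0"
  proof -
    fix x :: 'a assume "x = - x"
    then have "2 * x = 0" by (metis add_eq_0_iff2 mult_2)
    then show "x = 0" using two by simp
  qed
  have na: "\<alpha> \<noteq> - \<alpha>" using neg a0 by blast
  have nb: "\<beta> \<noteq> - \<beta>" using neg b0 by blast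
  have fixA: "fixed_field E A = F" and "\<exists>\<phi>. bij_betw \<phi> A (UNIV :: (bool \<times> bool) set)"
    using assms(9) unfolding galois_V4_def E_def A_def by blast+
  then obtain \<phi> where \<phi>: "bij_betw \<phi> A (UNIV :: (bool \<times> bool) set)" by blast
  have finA: "finite A" using bij_betw_finite[OF \<phi>] by simp
  have "card (UNIV :: (bool \<times> bool) set) = card (UNIV :: bool set) * card (UNIV :: bool set)"
    by (metis UNIV_Times_UNIV card_cartesian_product)
  then have cardA: "card A = 4" using bij_betw_same_card[OF \<phi>] by (simp add: card_UNIV_bool)
  have homA: "\<And>\<sigma>. \<sigma> \<in> A \<Longrightarrow> homL E \<sigma>" unfolding A_def by (rule auts_homL)
  have mapA: "\<And>\<sigma> x. \<sigma> \<in> A \<Longrightarrow> x \<in> E \<Longrightarrow> \<sigma> x \<in> E" unfolding A_def by (rule auts_map)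
  have fixFA: "\<And>\<sigma> x. \<sigma> \<in> A \<Longrightarrow> x \<in> F \<Longrightarrow> \<sigma> x = x" unfolding A_def by (rule auts_fix)
  have sqA: "\<And>\<sigma>. \<sigma> \<in> A \<Longrightarrow> (\<sigma> \<alpha> = \<alpha> \<or> \<sigma> \<alpha> = - \<alpha>) \<and> (\<sigma> \<beta> = \<beta> \<or> \<sigma> \<beta> = - \<beta>)"
  proof -
    fix \<sigma> assume s: "\<sigma> \<in> A"
    have "(\<sigma> \<alpha>)^2 = \<alpha>^2" using homL_sq[OF homA[OF s] aE] fixFA[OF s] assms(3,7) by simp
    moreover have "(\<sigma> \<beta>)^2 = \<beta>^2" using homL_sq[OF homA[OF s] bE] fixFA[OF s] assms(5,8) by simp
    ultimately show "(\<sigma> \<alpha> = \<alpha> \<or> \<sigma> \<alpha> = - \<alpha>) \<and> (\<sigma> \<beta> = \<beta> \<or> \<sigma> \<beta> = - \<beta>)"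
      by (simp add: power2_eq_iff)
  qed
  define \<Psi> where "\<Psi> \<sigma> = (\<sigma> \<alpha>, \<sigma> \<beta>)" for \<sigma> :: "'a \<Rightarrow> 'a"
  have detA: "\<And>\<sigma> \<sigma>'. \<sigma> \<in> A \<Longrightarrow> \<sigma>' \<in> A \<Longrightarrow> \<sigma> \<alpha> = \<sigma>' \<alpha> \<Longrightarrow> \<sigma> \<beta> = \<sigma>' \<beta> \<Longrightarrow> \<sigma> = \<sigma>'"
  proof -
    fix \<sigma> \<sigma>' assume h: "\<sigma> \<in> A" "\<sigma>' \<in> A" "\<sigma> \<alpha> = \<sigma>' \<alpha>" "\<sigma> \<beta> = \<sigma>' \<beta>"
    have "\<forall>x\<in>F. \<sigma> x = \<sigma>' x" using fixFA[OF h(1)] fixFA[OF h(2)] by simp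
    moreover have "\<forall>x\<in>{\<alpha>,\<beta>}. \<sigma> x = \<sigma>' x" using h(3,4) by simp
    ultimately show "\<sigma> = \<sigma>'"
      using aut_determined[of \<sigma> F "{\<alpha>,\<beta>}" F \<sigma>' F] h(1,2) unfolding A_def E_def by blast
  qed
  have injPsi: "inj_on \<Psi> A" unfolding inj_on_def \<Psi>_def using detA by auto
  define T where "T = {\<alpha>, -\<alpha>} \<times> {\<beta>, -\<beta>}"
  have cardT: "card T = 4" unfolding T_def using na nb by (simp add: card_cartesian_product)
  have PsiT: "\<Psi> ` A \<subseteq> T" unfolding T_def \<Psi>_def using sqA by auto
  have "card (\<Psi> ` A) = 4" using card_image[OF injPsi] cardA by simp
  then have PsiA: "\<Psi> ` A = T" using card_subset_eq[OF _ PsiT] cardT unfolding T_def by simp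
  obtain \<sigma>1 where s1: "\<sigma>1 \<in> A" "\<sigma>1 \<alpha> = - \<alpha>" "\<sigma>1 \<beta> = \<beta>"
  proof -
    have "(-\<alpha>, \<beta>) \<in> \<Psi> ` A" unfolding PsiA T_def by simp
    then show ?thesis using that unfolding \<Psi>_def by auto
  qed
  obtain \<sigma>2 where s2: "\<sigma>2 \<in> A" "\<sigma>2 \<alpha> = \<alpha>" "\<sigma>2 \<beta> = - \<beta>"
  proof -
    have "(\<alpha>, -\<beta>) \<in> \<Psi> ` A" unfolding PsiA T_def by simp
    then show ?thesis using that unfolding \<Psi>_def by auto
  qed
  have idA: "id \<in> A" unfolding A_def by (rule id_auts)
  have compA: "\<And>\<sigma> \<sigma>'. \<sigma> \<in> A \<Longrightarrow> \<sigma>' \<in> A \<Longrightarrow> \<sigma> \<circ> \<sigma>' \<in> A" unfolding A_def by (rule auts_comp)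
  have negA: "\<And>\<sigma> x. \<sigma> \<in> A \<Longrightarrow> x \<in> E \<Longrightarrow> \<sigma> (- x) = - \<sigma> x" using homL_uminus[OF homA sE] by blast
  define \<tau> where "\<tau> = \<sigma>2 \<circ> \<sigma>1"
  have tA: "\<tau> \<in> A" unfolding \<tau>_def using compA s1 s2 by blast
  have ta: "\<tau> \<alpha> = - \<alpha>" and tb: "\<tau> \<beta> = - \<beta>" unfolding \<tau>_def using s1 s2 negA[OF s2(1) aE] negA[OF s2(1) bE] by auto
  have c11: "\<sigma>1 \<circ> \<sigma>1 = id" by (rule detA) (use compA s1 idA negA[OF s1(1) aE] in auto)
  have c22: "\<sigma>2 \<circ> \<sigma>2 = id" by (rule detA) (use compA s2 idA negA[OF s2(1) bE] in auto)
  have c12: "\<sigma>1 \<circ> \<sigma>2 = \<tau>" by (rule detA) (use compA s1 s2 tA ta tb negA[OF s1(1) bE] in auto)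
  have s11: "\<And>x. \<sigma>1 (\<sigma>1 x) = x" using c11 by (metis comp_apply id_apply)
  have s22: "\<And>x. \<sigma>2 (\<sigma>2 x) = x" using c22 by (metis comp_apply id_apply)
  have s12: "\<And>x. \<sigma>1 (\<sigma>2 x) = \<sigma>2 (\<sigma>1 x)" using c12 unfolding \<tau>_def by (metis comp_apply)
  have allA: "\<And>\<sigma>. \<sigma> \<in> A \<Longrightarrow> \<sigma> = id \<or> \<sigma> = \<sigma>1 \<or> \<sigma> = \<sigma>2 \<or> \<sigma> = \<tau>"
  proof -
    fix \<sigma> assume s: "\<sigma> \<in> A"
    from sqA[OF s] show "\<sigma> = id \<or> \<sigma> = \<sigma>1 \<or> \<sigma> = \<sigma>2 \<or> \<sigma> = \<tau>"
      using detA[OF s idA] detA[OF s s1(1)] detA[OF s s2(1)] detA[OF s tA] s1 s2 ta tb by auto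
  qed
  have fixF: "\<And>x. x \<in> E \<Longrightarrow> \<sigma>1 x = x \<Longrightarrow> \<sigma>2 x = x \<Longrightarrow> x \<in> F"
  proof -
    fix x assume x: "x \<in> E" "\<sigma>1 x = x" "\<sigma>2 x = x"
    have "\<forall>\<sigma>\<in>A. \<sigma> x = x"
    proof
      fix \<sigma> assume "\<sigma> \<in> A"
      then show "\<sigma> x = x" using allA[of \<sigma>] x unfolding \<tau>_def by auto
    qed
    then show "x \<in> F" using fixA x(1) unfolding fixed_field_def by auto
  qed
  have s2E1: "\<And>x. x \<in> E1 \<Longrightarrow> \<sigma>2 x = x"
  proof -
    have "E1 \<subseteq> {x\<in>E. \<sigma>2 x = id x}" unfolding E1_def
      by (rule gen_field_least[OF equalizer_subfield[OF sE homA[OF s2(1)] homL_id]]) (use FE aE s2 fixFA in auto)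
    then show "\<And>x. x \<in> E1 \<Longrightarrow> \<sigma>2 x = x" by auto
  qed
  have s1E2: "\<And>x. x \<in> E2 \<Longrightarrow> \<sigma>1 x = x"
  proof -
    have "E2 \<subseteq> {x\<in>E. \<sigma>1 x = id x}" unfolding E2_def
      by (rule gen_field_least[OF equalizer_subfield[OF sE homA[OF s1(1)] homL_id]]) (use FE bE s1 fixFA in auto)
    then show "\<And>x. x \<in> E2 \<Longrightarrow> \<sigma>1 x = x" by auto
  qed
  have tE3: "\<And>x. x \<in> E3 \<Longrightarrow> \<tau> x = x"
  proof -
    have "\<tau> (\<alpha> * \<beta>) = \<alpha> * \<beta>" using homL_mult[OF homA[OF tA] aE bE] ta tb by simp
    then have "E3 \<subseteq> {x\<in>E. \<tau> x = id x}" unfolding E3_def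
      by (intro gen_field_least[OF equalizer_subfield[OF sE homA[OF tA] homL_id]]) (use FE sf_mult[OF sE aE bE] tA fixFA in auto)
    then show "\<And>x. x \<in> E3 \<Longrightarrow> \<tau> x = x" by auto
  qed
  have s1E1: "\<And>x. x \<in> E1 \<Longrightarrow> \<sigma>1 x \<in> E1"
  proof -
    have "E1 \<subseteq> {x\<in>E. \<sigma>1 x \<in> E1}" unfolding E1_def
      by (rule gen_field_least[OF preimage_subfield[OF sE homA[OF s1(1)] sE1[unfolded E1_def]]])
         (use FE aE s1 fixFA[OF s1(1)] FE1 sf_uminus[OF sE1 aE1] in \<open>auto simp: E1_def\<close>)
    then show "\<And>x. x \<in> E1 \<Longrightarrow> \<sigma>1 x \<in> E1" by auto
  qed
  have s2E2: "\<And>x. x \<in> E2 \<Longrightarrow> \<sigma>2 x \<in> E2"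
  proof -
    have "E2 \<subseteq> {x\<in>E. \<sigma>2 x \<in> E2}" unfolding E2_def
      by (rule gen_field_least[OF preimage_subfield[OF sE homA[OF s2(1)] sE2[unfolded E2_def]]])
         (use FE bE s2 fixFA[OF s2(1)] FE2 sf_uminus[OF sE2 bE2] in \<open>auto simp: E2_def\<close>)
    then show "\<And>x. x \<in> E2 \<Longrightarrow> \<sigma>2 x \<in> E2" by auto
  qed
  define \<rho>1 where "\<rho>1 = (\<lambda>x. if x \<in> E1 then \<sigma>1 x else x)"
  define \<rho>2 where "\<rho>2 = (\<lambda>x. if x \<in> E2 then \<sigma>2 x else x)"
  have r1: "\<rho>1 \<in> auts E1 F" unfolding \<rho>1_def
    by (rule restrict_aut[OF s1(1)[unfolded A_def] sE1 E1E]) (use s1E1 s11 in auto)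
  have r2: "\<rho>2 \<in> auts E2 F" unfolding \<rho>2_def
    by (rule restrict_aut[OF s2(1)[unfolded A_def] sE2 E2E]) (use s2E2 s22 in auto)
  have N1: "\<And>x. x \<in> E1 \<Longrightarrow> quad_norm E1 F x = x * \<sigma>1 x"
  proof -
    have "(THE \<rho>. \<rho> \<in> auts E1 F \<and> \<rho> \<noteq> id) = \<rho>1" unfolding E1_def
      by (rule quad_THE[OF two a0]) (use assms(3,7) r1 aE1 s1 in \<open>auto simp: E1_def \<rho>1_def\<close>)
    then show "\<And>x. x \<in> E1 \<Longrightarrow> quad_norm E1 F x = x * \<sigma>1 x" unfolding quad_norm_def \<rho>1_def by simp
  qed
  have N2: "\<And>x. x \<in> E2 \<Longrightarrow> quad_norm E2 F x = x * \<sigma>2 x"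
  proof -
    have "(THE \<rho>. \<rho> \<in> auts E2 F \<and> \<rho> \<noteq> id) = \<rho>2" unfolding E2_def
      by (rule quad_THE[OF two b0]) (use assms(5,8) r2 bE2 s2 in \<open>auto simp: E2_def \<rho>2_def\<close>)
    then show "\<And>x. x \<in> E2 \<Longrightarrow> quad_norm E2 F x = x * \<sigma>2 x" unfolding quad_norm_def \<rho>2_def by simp
  qed
  have EE3: "E = gen_field E3 {\<alpha>}"
  proof
    show "E \<subseteq> gen_field E3 {\<alpha>}" unfolding E_def
    proof (rule gen_field_least[OF gen_field_subfield])
      have I: "E3 \<subseteq> gen_field E3 {\<alpha>}" "\<alpha> \<in> gen_field E3 {\<alpha>}" using gen_field_incl[of E3 "{\<alpha>}"] by auto
      have "(\<alpha> * \<beta>) * inverse \<alpha> \<in> gen_field E3 {\<alpha>}"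
        using sf_mult[OF gen_field_subfield I(1)[THEN subsetD, OF abE3] sf_inverse[OF gen_field_subfield I(2)]] .
      then have "\<beta> \<in> gen_field E3 {\<alpha>}" using a0 by (simp add: field_simps)
      then show "F \<union> {\<alpha>, \<beta>} \<subseteq> gen_field E3 {\<alpha>}" using I FE3 by auto
    qed
    show "gen_field E3 {\<alpha>} \<subseteq> E" by (rule gen_field_least[OF sE]) (use E3E aE in auto)
  qed
  have tE: "\<tau> \<in> auts E E3" by (rule auts_K[OF tA[unfolded A_def]]) (use tE3 in auto)
  have NE: "\<And>x. x \<in> E \<Longrightarrow> quad_norm E E3 x = x * \<tau> x"
  proof -
    have "(THE \<rho>. \<rho> \<in> auts (gen_field E3 {\<alpha>}) E3 \<and> \<rho> \<noteq> id) = \<tau>"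
      by (rule quad_THE[OF two a0]) (use assms(3,7) tE ta FE3 EE3 in auto)
    then show "\<And>x. x \<in> E \<Longrightarrow> quad_norm E E3 x = x * \<tau> x" unfolding quad_norm_def using EE3 by simp
  qed
  have fixE2: "\<And>x. x \<in> E \<Longrightarrow> \<sigma>1 x = x \<Longrightarrow> x \<in> E2"
  proof -
    fix x assume x: "x \<in> E" "\<sigma>1 x = x"
    define y where "y = x + \<sigma>2 x"
    define z where "z = (x - \<sigma>2 x) * inverse \<beta>"
    have x2: "\<sigma>2 x \<in> E" using mapA[OF s2(1) x(1)] .
    have yE: "y \<in> E" unfolding y_def using sf_add[OF sE x(1) x2] .
    have zE: "z \<in> E" unfolding z_def using sf_mult[OF sE sf_diff[OF sE x(1) x2] sf_inverse[OF sE bE]] .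
    have "\<sigma>1 y = y" unfolding y_def using homL_add[OF homA[OF s1(1)] x(1) x2] x(2) s12 by simp
    moreover have "\<sigma>2 y = y" unfolding y_def using homL_add[OF homA[OF s2(1)] x(1) x2] s22 by simp
    ultimately have yF: "y \<in> F" using fixF yE by blast
    have "\<sigma>1 z = z" unfolding z_def
      using homL_mult[OF homA[OF s1(1)] sf_diff[OF sE x(1) x2] sf_inverse[OF sE bE]]
        homL_diff[OF homA[OF s1(1)] sE x(1) x2] homL_inverse[OF homA[OF s1(1)] sE bE] x(2) s12 s1(3) by simp
    moreover have "\<sigma>2 z = z"
    proof -
      have "\<sigma>2 z = (\<sigma>2 x - \<sigma>2 (\<sigma>2 x)) * inverse (\<sigma>2 \<beta>)" unfolding z_def
        using homL_mult[OF homA[OF s2(1)] sf_diff[OF sE x(1) x2] sf_inverse[OF sE bE]]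
          homL_diff[OF homA[OF s2(1)] sE x(1) x2] homL_inverse[OF homA[OF s2(1)] sE bE] by simp
      also have "\<dots> = (\<sigma>2 x - x) * inverse (- \<beta>)" using s22 s2(3) by simp
      also have "\<dots> = z" unfolding z_def by (simp add: algebra_simps)
      finally show ?thesis .
    qed
    ultimately have zF: "z \<in> F" using fixF zE by blast
    have xe: "x = (y + z * \<beta>) * inverse 2" unfolding y_def z_def using b0 two by (simp add: field_simps)
    have mem: "(y + z * \<beta>) * inverse 2 \<in> E2"
      using FE2 yF zF bE2 sE2 sf_2[OF sE2] by (meson sf_add sf_mult sf_inverse subsetD)
    show "x \<in> E2" by (subst xe) (rule mem)
  qed
  have nzA: "\<And>\<sigma> x. \<sigma> \<in> A \<Longrightarrow> x \<in> E \<Longrightarrow> x \<noteq> 0 \<Longrightarrow> \<sigma> x \<noteq> 0"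
    using homL_nonzero[OF homA sE] by blast
  have mulA: "\<And>\<sigma> x y. \<sigma> \<in> A \<Longrightarrow> x \<in> E \<Longrightarrow> y \<in> E \<Longrightarrow> \<sigma> (x * y) = \<sigma> x * \<sigma> y"
    using homL_mult[OF homA] by blast
  have addA: "\<And>\<sigma> x y. \<sigma> \<in> A \<Longrightarrow> x \<in> E \<Longrightarrow> y \<in> E \<Longrightarrow> \<sigma> (x + y) = \<sigma> x + \<sigma> y"
    using homL_add[OF homA] by blast
  have diffA: "\<And>\<sigma> x y. \<sigma> \<in> A \<Longrightarrow> x \<in> E \<Longrightarrow> y \<in> E \<Longrightarrow> \<sigma> (x - y) = \<sigma> x - \<sigma> y"
    using homL_diff[OF homA sE] by blast
  have invA: "\<And>\<sigma> x. \<sigma> \<in> A \<Longrightarrow> x \<in> E \<Longrightarrow> \<sigma> (inverse x) = inverse (\<sigma> x)"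
    using homL_inverse[OF homA sE] by blast
  have mk: "\<And>c v1 v2. v1 \<in> E1 \<Longrightarrow> v1 \<noteq> 0 \<Longrightarrow> v2 \<in> E2 \<Longrightarrow> v2 \<noteq> 0 \<Longrightarrow>
      c = (v1 * \<sigma>1 v1) * (v2 * \<sigma>2 v2) \<Longrightarrow>
      c \<in> setmul (quad_norm E1 F ` (E1 - {0})) (quad_norm E2 F ` (E2 - {0}))"
  proof -
    fix c v1 v2 assume v: "v1 \<in> E1" "v1 \<noteq> 0" "v2 \<in> E2" "v2 \<noteq> 0" "c = (v1 * \<sigma>1 v1) * (v2 * \<sigma>2 v2)"
    have "quad_norm E1 F v1 \<in> quad_norm E1 F ` (E1 - {0})" using v by auto
    moreover have "quad_norm E2 F v2 \<in> quad_norm E2 F ` (E2 - {0})" using v by auto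
    moreover have "c = quad_norm E1 F v1 * quad_norm E2 F v2" using v N1 N2 by simp
    ultimately show "c \<in> setmul (quad_norm E1 F ` (E1 - {0})) (quad_norm E2 F ` (E2 - {0}))"
      unfolding setmul_def by blast
  qed
  show ?thesis unfolding E_def[symmetric] E1_def[symmetric] E2_def[symmetric] E3_def[symmetric]
  proof (rule set_eqI, rule iffI)
    fix c assume "c \<in> quad_norm E E3 ` (E - {0}) \<inter> (F - {0})"
    then obtain u where u: "u \<in> E" "u \<noteq> 0" and c0: "c = quad_norm E E3 u" and cF0: "c \<in> F" "c \<noteq> 0" by blast
    have c: "c = u * \<tau> u" "c \<in> F" "c \<noteq> 0" using c0 NE[OF u(1)] cF0 by simp_all
    define h where "h = inverse (2::'a)"
    have hF: "h \<in> F" unfolding h_def by (rule sf_inverse[OF sF sf_2[OF sF]])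
    have hE: "h \<in> E" using FE hF by auto
    define p where "p = (u + \<sigma>1 u) * h"
    define q where "q = (u - \<sigma>1 u) * h * inverse \<alpha>"
    have u1E: "\<sigma>1 u \<in> E" by (rule mapA[OF s1(1) u(1)])
    have pE: "p \<in> E" unfolding p_def by (intro sf_mult[OF sE] sf_add[OF sE] u1E u(1) hE)
    have qE: "q \<in> E" unfolding q_def by (intro sf_mult[OF sE] sf_diff[OF sE] sf_inverse[OF sE] u1E u(1) hE aE)
    have s1h: "\<sigma>1 h = h" using fixFA[OF s1(1) hF] .
    have p1: "\<sigma>1 p = p"
    proof -
      have "\<sigma>1 p = (\<sigma>1 u + \<sigma>1 (\<sigma>1 u)) * \<sigma>1 h" unfolding p_def
        using mulA[OF s1(1) sf_add[OF sE u(1) u1E] hE] addA[OF s1(1) u(1) u1E] by simp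
      also have "\<dots> = p" unfolding p_def using s11 s1h by (simp add: add.commute)
      finally show ?thesis .
    qed
    have q1: "\<sigma>1 q = q"
    proof -
      have "\<sigma>1 q = (\<sigma>1 u - \<sigma>1 (\<sigma>1 u)) * \<sigma>1 h * inverse (\<sigma>1 \<alpha>)" unfolding q_def
        using mulA[OF s1(1) sf_mult[OF sE sf_diff[OF sE u(1) u1E] hE] sf_inverse[OF sE aE]]
          mulA[OF s1(1) sf_diff[OF sE u(1) u1E] hE] diffA[OF s1(1) u(1) u1E] invA[OF s1(1) aE] by simp
      also have "\<dots> = (\<sigma>1 u - u) * h * inverse (- \<alpha>)" using s11 s1h s1(2) by simp
      also have "\<dots> = q" unfolding q_def by (simp add: algebra_simps)
      finally show ?thesis .
    qed
    have pE2: "p \<in> E2" using fixE2[OF pE p1] .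
    have qE2: "q \<in> E2" using fixE2[OF qE q1] .
    have four: "(4::'a) \<noteq> 0" using two by (metis mult_2 mult_eq_0_iff numeral_Bit0 one_add_one)
    have ue: "u = p + q * \<alpha>" unfolding p_def q_def h_def using a0 two four by (simp add: field_simps)
    define pb where "pb = \<sigma>2 p"
    define qb where "qb = \<sigma>2 q"
    have pbE2: "pb \<in> E2" unfolding pb_def using s2E2[OF pE2] .
    have qbE2: "qb \<in> E2" unfolding qb_def using s2E2[OF qE2] .
    have pbE: "pb \<in> E" using pbE2 E2E by auto
    have qbE: "qb \<in> E" using qbE2 E2E by auto
    have pb1: "\<sigma>1 pb = pb" using s1E2[OF pbE2] .
    have qb1: "\<sigma>1 qb = qb" using s1E2[OF qbE2] .
    have pb2: "\<sigma>2 pb = p" unfolding pb_def using s22 by simp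
    have qb2: "\<sigma>2 qb = q" unfolding qb_def using s22 by simp
    have tp: "\<tau> p = pb" unfolding \<tau>_def pb_def using p1 by simp
    have tq: "\<tau> q = qb" unfolding \<tau>_def qb_def using q1 by simp
    have qaE: "q * \<alpha> \<in> E" using sf_mult[OF sE qE aE] .
    have qbaE: "qb * \<alpha> \<in> E" using sf_mult[OF sE qbE aE] .
    have tu: "\<tau> u = pb - qb * \<alpha>"
    proof -
      have "\<tau> u = \<tau> p + \<tau> q * \<tau> \<alpha>" unfolding ue using addA[OF tA pE qaE] mulA[OF tA qE aE] by simp
      then show ?thesis using tp tq ta by simp
    qed
    have s1u: "\<sigma>1 u = p - q * \<alpha>"
    proof -
      have "\<sigma>1 u = \<sigma>1 p + \<sigma>1 q * \<sigma>1 \<alpha>" unfolding ue using addA[OF s1(1) pE qaE] mulA[OF s1(1) qE aE] by simp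
      then show ?thesis using p1 q1 s1(2) by simp
    qed
    have s1tu: "\<sigma>1 (\<tau> u) = pb + qb * \<alpha>"
    proof -
      have "\<sigma>1 (\<tau> u) = \<sigma>1 pb - \<sigma>1 qb * \<sigma>1 \<alpha>" unfolding tu using diffA[OF s1(1) pbE qbaE] mulA[OF s1(1) qbE aE] by simp
      then show ?thesis using pb1 qb1 s1(2) by simp
    qed
    have cexp: "c = (p + q * \<alpha>) * (pb - qb * \<alpha>)"
      using c(1) by (simp only: tu flip: ue)
    have "c = \<sigma>1 c" using fixFA[OF s1(1) c(2)] by simp
    also have "\<dots> = \<sigma>1 u * \<sigma>1 (\<tau> u)" using c(1) mulA[OF s1(1) u(1) mapA[OF tA u(1)]] by simp
    also have "\<dots> = (p - q * \<alpha>) * (pb + qb * \<alpha>)" by (simp only: s1u s1tu)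
    finally have cexp2: "c = (p - q * \<alpha>) * (pb + qb * \<alpha>)" .
    have "2 * \<alpha> * (q * pb - p * qb) = (p + q * \<alpha>) * (pb - qb * \<alpha>) - (p - q * \<alpha>) * (pb + qb * \<alpha>)"
      by algebra
    also have "\<dots> = 0" using cexp cexp2 by simp
    finally have "q * pb - p * qb = 0" using two a0 by simp
    then have key: "q * pb = p * qb" by simp
    have a2: "\<alpha>^2 = a1" by (rule assms(7))
    have cfin: "c = p * pb - \<alpha>^2 * (q * qb)" using cexp key by algebra
    show "c \<in> setmul (quad_norm E1 F ` (E1 - {0})) (quad_norm E2 F ` (E2 - {0}))"
    proof (cases "q = 0")
      case True
      then have "p \<noteq> 0" using ue u(2) by simp
      moreover have "c = (1 * \<sigma>1 1) * (p * \<sigma>2 p)" using cfin True homL_1[OF homA[OF s1(1)]] pb_def by simp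
      ultimately show ?thesis using mk[of 1 p c] sf_1[OF sE1] pE2 by simp
    next
      case qn: False
      show ?thesis
      proof (cases "p = 0")
        case True
        have "c = (\<alpha> * \<sigma>1 \<alpha>) * (q * \<sigma>2 q)" using cfin True s1(2) qb_def by (simp add: power2_eq_square)
        then show ?thesis using mk[of \<alpha> q c] aE1 a0 qE2 qn by simp
      next
        case pn: False
        have pbn: "pb \<noteq> 0" unfolding pb_def using nzA[OF s2(1) pE pn] .
        define sn where "sn = p * pb"
        define r where "r = q * pb"
        have snE: "sn \<in> E" unfolding sn_def using sf_mult[OF sE pE pbE] .
        have rE: "r \<in> E" unfolding r_def using sf_mult[OF sE qE pbE] .
        have snF: "sn \<in> F"
          by (rule fixF[OF snE]) (simp_all add: sn_def mulA[OF s1(1) pE pbE] mulA[OF s2(1) pE pbE] p1 pb1 pb2, simp add: pb_def)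
        have r1: "\<sigma>1 r = r" unfolding r_def using mulA[OF s1(1) qE pbE] q1 pb1 by simp
        have r2: "\<sigma>2 r = r" unfolding r_def using mulA[OF s2(1) qE pbE] pb2 key qb_def by (simp add: mult.commute)
        have rF: "r \<in> F" by (rule fixF[OF rE r1 r2])
        have snn: "sn \<noteq> 0" unfolding sn_def using pn pbn by simp
        define v1 where "v1 = sn + r * \<alpha>"
        define v2 where "v2 = inverse p"
        have v1E1: "v1 \<in> E1" unfolding v1_def using FE1 snF rF aE1 sE1 by (meson sf_add sf_mult subsetD)
        have v2E2: "v2 \<in> E2" unfolding v2_def using sf_inverse[OF sE2 pE2] .
        have v2n: "v2 \<noteq> 0" unfolding v2_def using pn by simp
        have rsE: "r * \<alpha> \<in> E" using sf_mult[OF sE rE aE] .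
        have sv1: "\<sigma>1 v1 = sn - r * \<alpha>"
        proof -
          have "\<sigma>1 v1 = \<sigma>1 sn + \<sigma>1 r * \<sigma>1 \<alpha>" unfolding v1_def using addA[OF s1(1) snE rsE] mulA[OF s1(1) rE aE] by simp
          then show ?thesis using fixFA[OF s1(1) snF] fixFA[OF s1(1) rF] s1(2) by simp
        qed
        have sv2: "\<sigma>2 v2 = inverse pb" unfolding v2_def pb_def using invA[OF s2(1) pE] .
        have cs: "c * sn = sn^2 - \<alpha>^2 * r^2" unfolding sn_def r_def using cfin key by algebra
        have ceq: "c = (v1 * \<sigma>1 v1) * (v2 * \<sigma>2 v2)"
        proof -
          have "(v1 * \<sigma>1 v1) * (v2 * \<sigma>2 v2) = (sn^2 - \<alpha>^2 * r^2) * inverse sn"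
            unfolding sv1 sv2 unfolding v1_def v2_def sn_def by (simp add: algebra_simps power2_eq_square)
          also have "\<dots> = c" using cs snn by (simp add: field_simps)
          finally show ?thesis by simp
        qed
        have v1n: "v1 \<noteq> 0" using ceq c(3) by auto
        show ?thesis using mk[OF v1E1 v1n v2E2 v2n ceq] .
      qed
    qed
  next
    fix c assume "c \<in> setmul (quad_norm E1 F ` (E1 - {0})) (quad_norm E2 F ` (E2 - {0}))"
    then obtain v1 v2 where v: "v1 \<in> E1" "v1 \<noteq> 0" "v2 \<in> E2" "v2 \<noteq> 0"
      and c0: "c = quad_norm E1 F v1 * quad_norm E2 F v2" unfolding setmul_def by blast
    have c: "c = (v1 * \<sigma>1 v1) * (v2 * \<sigma>2 v2)" using c0 N1 N2 v by simp
    have v1E: "v1 \<in> E" and v2E: "v2 \<in> E" using v E1E E2E by auto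
    define u where "u = v1 * v2"
    have uE: "u \<in> E" unfolding u_def using sf_mult[OF sE v1E v2E] .
    have un: "u \<noteq> 0" unfolding u_def using v by simp
    have tv1: "\<tau> v1 = \<sigma>1 v1" unfolding \<tau>_def using s2E1[OF s1E1[OF v(1)]] by simp
    have tv2: "\<tau> v2 = \<sigma>2 v2" unfolding \<tau>_def using s1E2[OF v(3)] by simp
    have "quad_norm E E3 u = u * \<tau> u" using NE[OF uE] .
    also have "\<dots> = c" unfolding c u_def using mulA[OF tA v1E v2E] tv1 tv2 by (simp add: ac_simps)
    finally have cu: "quad_norm E E3 u = c" .
    have w1E1: "\<sigma>1 v1 \<in> E1" using s1E1[OF v(1)] .
    have w2E2: "\<sigma>2 v2 \<in> E2" using s2E2[OF v(3)] .
    have w1E: "\<sigma>1 v1 \<in> E" and w2E: "\<sigma>2 v2 \<in> E" using w1E1 w2E2 E1E E2E by auto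
    have n1E1: "v1 * \<sigma>1 v1 \<in> E1" using sf_mult[OF sE1 v(1) w1E1] .
    have n2E2: "v2 * \<sigma>2 v2 \<in> E2" using sf_mult[OF sE2 v(3) w2E2] .
    have n1F: "v1 * \<sigma>1 v1 \<in> F"
      by (rule fixF) (use n1E1 E1E mulA[OF s1(1) v1E w1E] s11 s2E1[OF n1E1] in \<open>auto simp: mult.commute\<close>)
    have n2F: "v2 * \<sigma>2 v2 \<in> F"
      by (rule fixF) (use n2E2 E2E mulA[OF s2(1) v2E w2E] s22 s1E2[OF n2E2] in \<open>auto simp: mult.commute\<close>)
    have cF: "c \<in> F" unfolding c using sf_mult[OF sF n1F n2F] .
    have "c \<noteq> 0" unfolding c using v nzA[OF s1(1) v1E] nzA[OF s2(1) v2E] by simp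
    then show "c \<in> quad_norm E E3 ` (E - {0}) \<inter> (F - {0})" using cu uE un cF by force
  qed
qed

end
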